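(* Let $d\ge1$. Among all spherical $d$-simplices on $S^d$ with circumradius $R'$ and $\cos R'<1/\sqrt{d+1}$ that have all their vertices on their circumsphere, the regular simplex has minimal vertex diameter.
   Context: $S^d$ is the unit sphere in $\mathbb{R}^{d+1}$ and $\angle(x,y)=\arccos(x^Ty)$ is the spherical distance. A spherical $d$-simplex is $\mathrm{co}\{a_1,\dots,a_{d+1}\}=\{\sum\lambda_ia_i/\|\sum\lambda_ia_i\|:\lambda_i\ge0,\text{ not all }0\}$ with $a_1,\dots,a_{d+1}\in S^d$ linearly independent. It is regular if all $\angle(a_i,a_j)$, $i\ne j$, are equal. The circumradius $R'$ and circumcenter $C$ of a set are the radius and center of the smallest spherical cap $\{y\in S^d:\angle(C,y)\le\rho\}$ containing it; the circumsphere is the boundary of this cap. The vertex diameter $D_v$ of the simplex $\mathrm{co}\{a_1,\dots,a_{d+1}\}$ is defined as follows. For each $i$, let $a_i'$ be the intersection of the great circle through $a_i$ and $C$ with $\mathrm{co}\{a_1,\dots,a_{i-1},a_{i+1},\dots,a_{d+1}\}$. Then $D_v=\max_i\angle(a_i,a_i')$. *)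

theory Defs
  imports "HOL-Analysis.Analysis"
begin

text \<open>The ambient space R^(d+1) is real^'n with CARD('n) = d+1; the unit sphere S^d is
  sphere 0 1.  A spherical d-simplex is given by its d+1 vertices, indexed by the
  finite type 'n itself.\<close>

definition sangle :: "real^'n \<Rightarrow> real^'n \<Rightarrow> real" where
  "sangle x y = arccos (x \<bullet> y)"

definition sco :: "('i \<Rightarrow> real^'n) \<Rightarrow> 'i set \<Rightarrow> (real^'n) set" where
  "sco a I = {(\<Sum>i\<in>I. l i *\<^sub>R a i) /\<^sub>R norm (\<Sum>i\<in>I. l i *\<^sub>R a i) | l.
                 (\<forall>i\<in>I. 0 \<le> l i) \<and> (\<exists>i\<in>I. l i \<noteq> 0)}"

definition spherical_simplex :: "('n::finite \<Rightarrow> real^'n) \<Rightarrow> bool" where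
  "spherical_simplex a \<longleftrightarrow> (\<forall>i. a i \<in> sphere 0 1) \<and> inj a \<and> independent (range a)"

definition regular_simplex :: "('n::finite \<Rightarrow> real^'n) \<Rightarrow> bool" where
  "regular_simplex a \<longleftrightarrow> spherical_simplex a \<and>
     (\<forall>i j k l. i \<noteq> j \<longrightarrow> k \<noteq> l \<longrightarrow> sangle (a i) (a j) = sangle (a k) (a l))"

definition scap :: "real^'n \<Rightarrow> real \<Rightarrow> (real^'n) set" where
  "scap C \<rho> = {y \<in> sphere 0 1. sangle C y \<le> \<rho>}"

definition circumradius :: "(real^'n) set \<Rightarrow> real" where
  "circumradius S = Inf {\<rho>. \<exists>C\<in>sphere 0 1. S \<subseteq> scap C \<rho>}"

text \<open>Center of a smallest cap (unique for spherical simplices).\<close>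
definition circumcenter :: "(real^'n) set \<Rightarrow> real^'n" where
  "circumcenter S = (SOME C. C \<in> sphere 0 1 \<and> S \<subseteq> scap C (circumradius S))"

definition vertices_on_circumsphere :: "('n::finite \<Rightarrow> real^'n) \<Rightarrow> bool" where
  "vertices_on_circumsphere a \<longleftrightarrow>
     (\<forall>i. sangle (circumcenter (sco a UNIV)) (a i) = circumradius (sco a UNIV))"

definition great_circle :: "real^'n \<Rightarrow> real^'n \<Rightarrow> (real^'n) set" where
  "great_circle x y = sphere 0 1 \<inter> span {x, y}"

definition opp_point :: "('n::finite \<Rightarrow> real^'n) \<Rightarrow> 'n \<Rightarrow> real^'n" where
  "opp_point a i = (THE p. p \<in> great_circle (a i) (circumcenter (sco a UNIV))
                            \<and> p \<in> sco a (UNIV - {i}))"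

definition vertex_diameter :: "('n::finite \<Rightarrow> real^'n) \<Rightarrow> real" where
  "vertex_diameter a = Max (range (\<lambda>i. sangle (a i) (opp_point a i)))"

end

theory Submission
  imports Defs
begin

lemma dot_unit_bound:
  fixes x y :: "real^'n"
  assumes "norm x = 1" "norm y = 1"
  shows "-1 \<le> x \<bullet> y" "x \<bullet> y \<le> 1"
  using Cauchy_Schwarz_ineq2[of x y] assms by auto

lemma ss_span:
  fixes a :: "'n::finite \<Rightarrow> real^'n"
  assumes "spherical_simplex a"
  shows "span (range a) = UNIV"
proof -
  have i: "independent (range a)" and inj: "inj a" using assms unfolding spherical_simplex_def by auto
  have "card (range a) = CARD('n)" using inj by (simp add: card_image)
  hence "dim (UNIV::(real^'n) set) \<le> card (range a)" by simp
  from card_ge_dim_independent[OF _ i this] show ?thesis by auto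
qed

lemma ss_rep:
  fixes a :: "'n::finite \<Rightarrow> real^'n"
  assumes "spherical_simplex a"
  shows "\<exists>l. x = (\<Sum>j\<in>UNIV. l j *\<^sub>R a j)"
proof -
  have inj: "inj a" using assms unfolding spherical_simplex_def by auto
  have "x \<in> span (range a)" using ss_span[OF assms] by auto
  then obtain u where u: "x = (\<Sum>v\<in>range a. u v *\<^sub>R v)" using span_finite[of "range a"] by auto
  also have "\<dots> = (\<Sum>j\<in>UNIV. u (a j) *\<^sub>R a j)"
    using sum.reindex[OF inj, of "\<lambda>v. u v *\<^sub>R v"] by simp
  finally show ?thesis by (intro exI[of _ "\<lambda>j. u (a j)"])
qed

lemma ss_coeff:
  fixes a :: "'n::finite \<Rightarrow> real^'n"
  assumes "spherical_simplex a" "(\<Sum>j\<in>UNIV. m j *\<^sub>R a j) = 0"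
  shows "m j = 0"
proof (rule ccontr)
  assume nz: "m j \<noteq> 0"
  have i: "independent (range a)" and inj: "inj a" using assms unfolding spherical_simplex_def by auto
  let ?u = "\<lambda>v. m (inv a v)"
  have "(\<Sum>v\<in>range a. ?u v *\<^sub>R v) = (\<Sum>j\<in>UNIV. m j *\<^sub>R a j)"
    using sum.reindex[OF inj, of "\<lambda>v. ?u v *\<^sub>R v"] inj by simp
  moreover have "\<exists>v\<in>range a. ?u v \<noteq> 0" using nz inj by (intro bexI[of _ "a j"]) auto
  ultimately have "dependent (range a)" using dependent_finite[of "range a"] assms(2) by auto
  thus False using i by simp
qed

lemma ss_dual:
  fixes a :: "'n::finite \<Rightarrow> real^'n"
  assumes "spherical_simplex a"
  shows "\<exists>v. \<forall>j. v \<bullet> a j = m j"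
proof -
  let ?L = "\<lambda>x::real^'n. (\<chi> j. x \<bullet> a j) :: real^'n"
  have lin: "linear ?L"
    by (intro linearI) (auto simp: vec_eq_iff inner_add_left)
  have injL: "inj ?L"
  proof (rule linear_injective_0[OF lin, THEN iffD2], intro allI impI)
    fix x assume "?L x = 0"
    hence z: "\<And>j. x \<bullet> a j = 0" by (simp add: vec_eq_iff)
    obtain l where l: "x = (\<Sum>j\<in>UNIV. l j *\<^sub>R a j)" using ss_rep[OF assms] by blast
    have "x \<bullet> x = (\<Sum>j\<in>UNIV. l j * (x \<bullet> a j))"
      by (subst (2) l) (simp add: inner_sum_right)
    thus "x = 0" using z by simp
  qed
  have "surj ?L" by (rule linear_injective_imp_surjective[OF lin injL refl])
  hence "\<exists>v. (\<chi> j. m j) = ?L v" by (rule surjD)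
  then obtain v where v: "(\<chi> j. m j) = ?L v" by (elim exE)
  have "v \<bullet> a j = m j" for j using arg_cong[OF v, of "\<lambda>z. z $ j"] by simp
  thus ?thesis by blast
qed

lemma sangle_nonneg:
  fixes x y :: "real^'n"
  assumes "norm x = 1" "norm y = 1"
  shows "0 \<le> sangle x y"
  unfolding sangle_def using dot_unit_bound[OF assms] by (intro arccos_lbound) auto

lemma cr_bdd:
  fixes S :: "(real^'n) set"
  assumes "S \<subseteq> sphere 0 1" "S \<noteq> {}"
  shows "bdd_below {\<rho>. \<exists>C\<in>sphere 0 1. S \<subseteq> scap C \<rho>}"
proof (rule bdd_belowI[of _ 0])
  fix \<rho> assume "\<rho> \<in> {\<rho>. \<exists>C\<in>sphere 0 1. S \<subseteq> scap C \<rho>}"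
  then obtain C where C: "C \<in> sphere 0 1" "S \<subseteq> scap C \<rho>" by auto
  obtain y where y: "y \<in> S" using assms by auto
  hence "sangle C y \<le> \<rho>" using C unfolding scap_def by auto
  moreover have "0 \<le> sangle C y" using C y assms by (intro sangle_nonneg) auto
  ultimately show "0 \<le> \<rho>" by simp
qed

lemma cr_le:
  fixes S :: "(real^'n) set"
  assumes "S \<subseteq> sphere 0 1" "S \<noteq> {}" "C \<in> sphere 0 1" "S \<subseteq> scap C \<rho>"
  shows "circumradius S \<le> \<rho>"
  unfolding circumradius_def using assms by (intro cInf_lower[OF _ cr_bdd]) auto

lemma scap_mono: "\<rho> \<le> \<rho>' \<Longrightarrow> scap C \<rho> \<subseteq> scap C \<rho>'"
  unfolding scap_def by auto

lemma cr_exists: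
  fixes S :: "(real^'n) set"
  assumes S1: "S \<subseteq> sphere 0 1" and S2: "S \<noteq> {}"
  shows "\<exists>C\<in>sphere 0 1. S \<subseteq> scap C (circumradius S)"
proof -
  define P where "P = {\<rho>. \<exists>C\<in>sphere 0 1. S \<subseteq> scap C \<rho>}"
  define I where "I = circumradius S"
  have IP: "I = Inf P" unfolding I_def P_def circumradius_def by simp
  have bdd: "bdd_below P" unfolding P_def using cr_bdd[OF S1 S2] .
  obtain y0 where y0: "y0 \<in> S" using S2 by auto
  have "S \<subseteq> scap y0 pi"
  proof
    fix y assume "y \<in> S"
    hence "norm y = 1" "norm y0 = 1" using y0 S1 by auto
    hence "arccos (y0 \<bullet> y) \<le> pi" using dot_unit_bound[of y0 y] by (intro arccos_ubound) simp_all
    thus "y \<in> scap y0 pi" unfolding scap_def sangle_def using \<open>y \<in> S\<close> S1 by auto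
  qed
  moreover have "y0 \<in> sphere 0 1" using y0 S1 by auto
  ultimately have "pi \<in> P" unfolding P_def by blast
  hence Pne: "P \<noteq> {}" by auto
  have "\<forall>k. \<exists>C. C \<in> sphere 0 1 \<and> S \<subseteq> scap C (I + inverse (real (Suc k)))"
  proof
    fix k
    have "Inf P < I + inverse (real (Suc k))" using IP by simp
    then obtain \<rho> where r: "\<rho> \<in> P" "\<rho> < I + inverse (real (Suc k))"
      using cInf_less_iff[OF Pne bdd] by auto
    then obtain C where "C \<in> sphere 0 1" "S \<subseteq> scap C \<rho>" unfolding P_def by auto
    thus "\<exists>C. C \<in> sphere 0 1 \<and> S \<subseteq> scap C (I + inverse (real (Suc k)))"
      using r(2) scap_mono[of \<rho> "I + inverse (real (Suc k))" C] by auto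
  qed
  then obtain Cs where Csall: "\<forall>k. Cs k \<in> sphere 0 1 \<and> S \<subseteq> scap (Cs k) (I + inverse (real (Suc k)))"
    by (rule choice[THEN exE])
  have Cs1: "Cs k \<in> sphere 0 1" for k using Csall[rule_format, of k] by (rule conjunct1)
  have Cs2: "S \<subseteq> scap (Cs k) (I + inverse (real (Suc k)))" for k using Csall[rule_format, of k] by (rule conjunct2)
  note Cs = Cs1 Cs2
  have "seq_compact (sphere (0::real^'n) 1)" using compact_imp_seq_compact compact_sphere by blast
  then obtain C r where C: "C \<in> sphere 0 1" "strict_mono (r::nat\<Rightarrow>nat)" "(Cs \<circ> r) \<longlonglongrightarrow> C"
    using seq_compactE[of "sphere 0 1" Cs] Cs(1) by blast
  have "S \<subseteq> scap C I"
  proof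
    fix y assume y: "y \<in> S"
    have yn: "norm y = 1" using y S1 by auto
    have t1: "(\<lambda>k. Cs (r k) \<bullet> y) \<longlonglongrightarrow> C \<bullet> y"
      using C(3) by (intro tendsto_intros) (simp add: o_def)
    have "Cs (r k) \<bullet> y \<in> {-1..1}" for k
    proof -
      have "norm (Cs (r k)) = 1" using Cs(1)[of "r k"] by simp
      from dot_unit_bound[OF this yn] show ?thesis by simp
    qed
    hence "\<forall>\<^sub>F k in sequentially. Cs (r k) \<bullet> y \<in> {-1..1}" by (intro always_eventually) blast
    hence ev: "\<forall>\<^sub>F k in sequentially. Cs (r k) \<bullet> y \<in> {-1..1}" .
    have Cy: "C \<bullet> y \<in> {-1..1}" using dot_unit_bound[of C y] C(1) yn by auto
    have t2: "(\<lambda>k. arccos (Cs (r k) \<bullet> y)) \<longlonglongrightarrow> arccos (C \<bullet> y)"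
      by (rule continuous_on_tendsto_compose[OF continuous_on_arccos' t1 Cy ev])
    have t3: "(\<lambda>k. I + inverse (real (Suc k))) \<longlonglongrightarrow> I + 0"
      by (intro tendsto_intros LIMSEQ_inverse_real_of_nat)
    have le: "arccos (Cs (r k) \<bullet> y) \<le> I + inverse (real (Suc k))" for k
    proof -
      have "arccos (Cs (r k) \<bullet> y) \<le> I + inverse (real (Suc (r k)))"
        using Cs(2)[of "r k"] y unfolding scap_def sangle_def by auto
      also have "\<dots> \<le> I + inverse (real (Suc k))"
        using seq_suble[OF C(2), of k] by (simp add: field_simps)
      finally show ?thesis .
    qed
    have "arccos (C \<bullet> y) \<le> I + 0"
      by (rule LIMSEQ_le[OF t2 t3]) (use le in auto)
    thus "y \<in> scap C I" unfolding scap_def sangle_def using y S1 by auto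
  qed
  hence "S \<subseteq> scap C (circumradius S)" unfolding I_def .
  thus ?thesis by (rule bexI[OF _ C(1)])
qed

lemma sco_sphere:
  fixes a :: "'n::finite \<Rightarrow> real^'n"
  assumes "spherical_simplex a"
  shows "sco a UNIV \<subseteq> sphere 0 1"
proof
  fix y assume "y \<in> sco a UNIV"
  then obtain l where y: "y = (\<Sum>i\<in>UNIV. l i *\<^sub>R a i) /\<^sub>R norm (\<Sum>i\<in>UNIV. l i *\<^sub>R a i)"
    and l: "\<exists>i. l i \<noteq> 0" unfolding sco_def by auto
  have "(\<Sum>i\<in>UNIV. l i *\<^sub>R a i) \<noteq> 0" using l ss_coeff[OF assms] by blast
  thus "y \<in> sphere 0 1" using y by simp
qed

lemma vert_sco:
  fixes a :: "'n::finite \<Rightarrow> real^'n"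
  assumes "spherical_simplex a"
  shows "a i \<in> sco a UNIV"
proof -
  have n: "norm (a i) = 1" using assms unfolding spherical_simplex_def by auto
  have "(\<Sum>j\<in>UNIV. (if j = i then 1 else 0) *\<^sub>R a j) = (\<Sum>j\<in>UNIV. if j = i then a i else 0)"
    by (intro sum.cong) auto
  also have "\<dots> = a i" by simp
  finally have "(\<Sum>j\<in>UNIV. (if j = i then 1 else 0) *\<^sub>R a j) = a i" .
  hence e1: "a i = (\<Sum>j\<in>UNIV. (if j = i then 1 else 0) *\<^sub>R a j) /\<^sub>R norm (\<Sum>j\<in>UNIV. (if j = i then 1 else 0) *\<^sub>R a j)"
    using n by simp
  have e2: "(\<forall>j\<in>UNIV. 0 \<le> (if j = i then 1 else 0::real)) \<and> (\<exists>j\<in>UNIV. (if j = i then 1 else 0::real) \<noteq> 0)"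
    by auto
  show ?thesis unfolding sco_def mem_Collect_eq
    apply (rule exI[of _ "\<lambda>j. if j = i then 1 else 0"])
    apply (rule conjI[OF e1 e2])
    done
qed

lemma sco_cap:
  fixes a :: "'n::finite \<Rightarrow> real^'n"
  assumes ss: "spherical_simplex a" and C: "norm C = 1" and g: "0 < g" and ge: "\<And>j. g \<le> C \<bullet> a j"
  shows "sco a UNIV \<subseteq> scap C (arccos g)"
proof
  fix y assume yin: "y \<in> sco a UNIV"
  then obtain l where y: "y = (\<Sum>i\<in>UNIV. l i *\<^sub>R a i) /\<^sub>R norm (\<Sum>i\<in>UNIV. l i *\<^sub>R a i)"
    and l0: "\<And>i. 0 \<le> l i" and l: "\<exists>i. l i \<noteq> 0" unfolding sco_def by auto
  define s where "s = (\<Sum>i\<in>UNIV. l i *\<^sub>R a i)"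
  have sn: "s \<noteq> 0" using l ss_coeff[OF ss] unfolding s_def by blast
  have an: "\<And>i. norm (a i) = 1" using ss unfolding spherical_simplex_def by auto
  have "norm s \<le> (\<Sum>i\<in>UNIV. norm (l i *\<^sub>R a i))" unfolding s_def by (rule norm_sum)
  also have "\<dots> = (\<Sum>i\<in>UNIV. l i)" using an l0 by simp
  finally have ns: "norm s \<le> (\<Sum>i\<in>UNIV. l i)" .
  have "C \<bullet> s = (\<Sum>i\<in>UNIV. l i * (C \<bullet> a i))" unfolding s_def by (simp add: inner_sum_right)
  also have "\<dots> \<ge> (\<Sum>i\<in>UNIV. l i * g)" using l0 ge by (intro sum_mono mult_left_mono) auto
  finally have "g * (\<Sum>i\<in>UNIV. l i) \<le> C \<bullet> s" by (simp add: sum_distrib_left mult.commute)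
  moreover have "g * norm s \<le> g * (\<Sum>i\<in>UNIV. l i)" using ns g by simp
  ultimately have "g * norm s \<le> C \<bullet> s" by linarith
  hence gy: "g \<le> C \<bullet> y" using sn unfolding y s_def[symmetric] by (simp add: field_simps)
  have yn: "norm y = 1" using sco_sphere[OF ss] yin by auto
  have "C \<bullet> y \<le> 1" using dot_unit_bound[OF C yn] by simp
  hence "arccos (C \<bullet> y) \<le> arccos g" using gy g by (intro arccos_le_arccos) simp_all
  moreover have "y \<in> sphere 0 1" using yn by simp
  ultimately show "y \<in> scap C (arccos g)" unfolding scap_def sangle_def by blast
qed

lemma cr_ge_g:
  fixes a :: "'n::finite \<Rightarrow> real^'n"
  assumes ss: "spherical_simplex a" and C: "norm C = 1" and g: "0 < g" and ge: "\<And>j. g \<le> C \<bullet> a j"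
  shows "circumradius (sco a UNIV) \<le> arccos g"
proof (rule cr_le[OF sco_sphere[OF ss]])
  show "sco a UNIV \<noteq> {}" using vert_sco[OF ss] by blast
  show "C \<in> sphere 0 1" using C by simp
  show "sco a UNIV \<subseteq> scap C (arccos g)" by (rule sco_cap[OF ss C g ge])
qed

lemma circ_props:
  fixes a :: "'n::finite \<Rightarrow> real^'n"
  assumes ss: "spherical_simplex a" and voc: "vertices_on_circumsphere a"
  shows "norm (circumcenter (sco a UNIV)) = 1"
    and "\<And>i. circumcenter (sco a UNIV) \<bullet> a i = cos (circumradius (sco a UNIV))"
    and "0 < cos (circumradius (sco a UNIV))"
proof -
  define S where "S = sco a UNIV"
  define C where "C = circumcenter S"
  define R where "R = circumradius S"
  have S1: "S \<subseteq> sphere 0 1" unfolding S_def by (rule sco_sphere[OF ss])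
  have S2: "S \<noteq> {}" unfolding S_def using vert_sco[OF ss] by blast
  have ex: "\<exists>C. C \<in> sphere 0 1 \<and> S \<subseteq> scap C (circumradius S)"
    using cr_exists[OF S1 S2] by blast
  have "C \<in> sphere 0 1 \<and> S \<subseteq> scap C R" unfolding C_def R_def circumcenter_def
    by (rule someI_ex[OF ex])
  hence Cn: "norm C = 1" by simp
  thus "norm (circumcenter (sco a UNIV)) = 1" unfolding C_def S_def .
  have an: "norm (a i) = 1" for i using ss unfolding spherical_simplex_def by simp
  have eq: "C \<bullet> a i = cos R" for i
  proof -
    have "arccos (C \<bullet> a i) = R" using voc unfolding vertices_on_circumsphere_def sangle_def C_def R_def S_def by simp
    moreover have "-1 \<le> C \<bullet> a i" "C \<bullet> a i \<le> 1" using dot_unit_bound[OF Cn an] by auto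
    ultimately show ?thesis by (metis cos_arccos)
  qed
  thus "\<And>i. circumcenter (sco a UNIV) \<bullet> a i = cos (circumradius (sco a UNIV))"
    unfolding C_def R_def S_def .
  obtain v where v: "\<And>j. v \<bullet> a j = 1" using ss_dual[OF ss, of "\<lambda>_. 1"] by blast
  have vnz: "v \<noteq> 0" using v[of undefined] by auto
  define g where "g = 1 / norm v"
  have g0: "0 < g" unfolding g_def using vnz by simp
  have Cv: "norm (v /\<^sub>R norm v) = 1" using vnz by simp
  have gj: "g \<le> (v /\<^sub>R norm v) \<bullet> a j" for j unfolding g_def using v[of j] by (simp add: divide_simps)
  have Rle: "R \<le> arccos g" unfolding R_def S_def by (rule cr_ge_g[OF ss Cv g0 gj])
  have g1: "g \<le> 1" using gj[of undefined] dot_unit_bound(2)[OF Cv an[of undefined]] by linarith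
  have "arccos g < arccos 0" by (rule arccos_less_arccos) (use g0 g1 in auto)
  hence R2: "R < pi/2" using Rle by simp
  have "0 \<le> R" using voc sangle_nonneg[OF Cn an] unfolding vertices_on_circumsphere_def C_def R_def S_def
    by metis
  hence "0 < cos R" using R2 by (intro cos_gt_zero_pi) auto
  thus "0 < cos (circumradius (sco a UNIV))" unfolding R_def S_def .
qed

lemma kkt:
  fixes a :: "'n::finite \<Rightarrow> real^'n"
  assumes ss: "spherical_simplex a" and Cn: "norm C = 1" and Ca: "\<And>i. C \<bullet> a i = \<gamma>"
    and \<gamma>0: "0 < \<gamma>"
    and rep: "C = (\<Sum>j\<in>UNIV. l j *\<^sub>R a j)"
    and minim: "\<And>C' g. norm C' = 1 \<Longrightarrow> 0 < g \<Longrightarrow> (\<And>j. g \<le> C' \<bullet> a j) \<Longrightarrow> g \<le> \<gamma>"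
  shows "0 \<le> l k"
proof (rule ccontr)
  assume "\<not> 0 \<le> l k"
  hence lk: "l k < 0" by simp
  define S' where "S' = (\<Sum>j\<in>UNIV. l j) - l k"
  define M where "M = max 1 ((\<bar>\<gamma> * S'\<bar> + 1) / (- \<gamma> * l k))"
  define \<mu> where "\<mu> = (\<lambda>j. if j = k then M else 1::real)"
  have M1: "1 \<le> M" unfolding M_def by simp
  have mu1: "1 \<le> \<mu> j" for j unfolding \<mu>_def using M1 by simp
  obtain v where v: "\<And>j. v \<bullet> a j = \<mu> j" using ss_dual[OF ss, of \<mu>] by blast
  define w where "w = v \<bullet> C"
  have w: "w = (\<Sum>j\<in>UNIV. l j * \<mu> j)" unfolding w_def rep by (simp add: inner_sum_right v)
  also have "\<dots> = l k * M + (\<Sum>j\<in>UNIV - {k}. l j * \<mu> j)"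
    by (subst sum.remove[of UNIV k]) (auto simp: \<mu>_def)
  also have "(\<Sum>j\<in>UNIV - {k}. l j * \<mu> j) = (\<Sum>j\<in>UNIV - {k}. l j)"
    by (intro sum.cong) (auto simp: \<mu>_def)
  also have "\<dots> = S'" unfolding S'_def by (subst sum.remove[of UNIV k]) auto
  finally have wS: "w = l k * M + S'" .
  have pos: "0 < - \<gamma> * l k" using \<gamma>0 lk by (simp add: mult_pos_neg)
  have "(\<bar>\<gamma> * S'\<bar> + 1) / (- \<gamma> * l k) \<le> M" unfolding M_def by simp
  hence "\<bar>\<gamma> * S'\<bar> + 1 \<le> M * (- \<gamma> * l k)" using pos_divide_le_eq[OF pos] by blast
  hence gw: "\<gamma> * w \<le> -1" unfolding wS by (auto simp: algebra_simps abs_if split: if_splits)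
  define V where "V = v \<bullet> v"
  have V0: "0 \<le> V" unfolding V_def by simp
  define t where "t = 1 / (\<gamma> * V + 1)"
  have gV0: "0 < \<gamma> * V + 1" using mult_nonneg_nonneg[OF less_imp_le[OF \<gamma>0] V0] by linarith
  have t0: "0 < t" unfolding t_def using gV0 by simp
  have tV: "t * (\<gamma> * V) < 1" unfolding t_def using gV0 by (simp add: divide_simps)
  define Ct where "Ct = C + t *\<^sub>R v"
  have Cta: "Ct \<bullet> a j = \<gamma> + t * \<mu> j" for j unfolding Ct_def by (simp add: inner_add_left Ca v)
  have CC: "C \<bullet> C = 1" using Cn by (metis power2_norm_eq_inner one_power2)
  have "Ct \<bullet> Ct = C \<bullet> C + t * (C \<bullet> v) + t * (v \<bullet> C) + t * (t * (v \<bullet> v))"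
    unfolding Ct_def by (simp only: inner_add_left inner_add_right inner_scaleR_left inner_scaleR_right) (simp add: distrib_left)
  hence CtCt: "Ct \<bullet> Ct = 1 + 2 * t * w + t^2 * V"
    unfolding V_def w_def CC by (simp add: inner_commute power2_eq_square)
  have key: "\<gamma> * norm Ct < \<gamma> + t * \<mu> j" for j
  proof (rule power2_less_imp_less)
    have "(\<gamma> * norm Ct)^2 = \<gamma>^2 * (1 + 2 * t * w + t^2 * V)"
      unfolding power_mult_distrib power2_norm_eq_inner CtCt ..
    also have "\<dots> < (\<gamma> + t * \<mu> j)^2"
    proof -
      have "\<gamma>^2 * (2 * t * w) = (2 * t * \<gamma>) * (\<gamma> * w)" by (simp add: power2_eq_square algebra_simps)
      also have "\<dots> \<le> (2 * t * \<gamma>) * (-1)" using gw t0 \<gamma>0 by (intro mult_left_mono) auto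
      finally have f1: "\<gamma>^2 * (2 * t * w) \<le> - 2 * t * \<gamma>" by simp
      have f2: "\<gamma>^2 * (t^2 * V) < 2 * t * \<gamma>"
      proof -
        have "\<gamma>^2 * (t^2 * V) = (t * \<gamma>) * (t * (\<gamma> * V))" by (simp add: power2_eq_square algebra_simps)
        also have "\<dots> < (t * \<gamma>) * 1" using tV t0 \<gamma>0 by (intro mult_strict_left_mono) auto
        also have "\<dots> \<le> 2 * t * \<gamma>" using t0 \<gamma>0 by simp
        finally show ?thesis .
      qed
      have f3: "0 \<le> 2 * \<gamma> * t * \<mu> j" using mu1[of j] t0 \<gamma>0 by simp
      have f4: "0 \<le> (t * \<mu> j)^2" by simp
      have e1: "\<gamma>^2 * (1 + 2 * t * w + t^2 * V) = \<gamma>^2 + \<gamma>^2 * (2 * t * w) + \<gamma>^2 * (t^2 * V)"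
        by (simp add: algebra_simps)
      have e2: "(\<gamma> + t * \<mu> j)^2 = \<gamma>^2 + 2 * \<gamma> * t * \<mu> j + (t * \<mu> j)^2"
        by (simp add: power2_eq_square algebra_simps)
      show ?thesis unfolding e1 e2 using f1 f2 f3 f4 by linarith
    qed
    finally show "(\<gamma> * norm Ct)^2 < (\<gamma> + t * \<mu> j)^2" .
    show "0 \<le> \<gamma> + t * \<mu> j" using \<gamma>0 t0 mu1[of j] by (smt (verit) mult_pos_pos)
  qed
  have Ctnz: "Ct \<noteq> 0"
  proof
    assume "Ct = 0"
    hence "Ct \<bullet> a k = 0" by simp
    thus False using Cta[of k] \<gamma>0 t0 mu1[of k] by (smt (verit) mult_pos_pos)
  qed
  define C' where "C' = Ct /\<^sub>R norm Ct"
  have C'n: "norm C' = 1" unfolding C'_def using Ctnz by simp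
  have C'a: "\<gamma> < C' \<bullet> a j" for j
    unfolding C'_def using key[of j] Ctnz Cta[of j] by (simp add: field_simps)
  define g where "g = Min (range (\<lambda>j. C' \<bullet> a j))"
  have "g \<in> range (\<lambda>j. C' \<bullet> a j)" unfolding g_def by (intro Min_in) auto
  hence gg: "\<gamma> < g" using C'a by auto
  have gle: "g \<le> C' \<bullet> a j" for j unfolding g_def by (intro Min_le) auto
  have "g \<le> \<gamma>" by (rule minim[OF C'n _ gle]) (use gg \<gamma>0 in linarith)
  thus False using gg by simp
qed

lemma dual_sum:
  fixes a :: "'i \<Rightarrow> real^'n"
  assumes u: "\<And>k. u \<bullet> a k = (if k = j then 1 else 0)" and J: "finite J"
  shows "u \<bullet> (\<Sum>k\<in>J. c k *\<^sub>R a k) = (if j \<in> J then c j else 0)"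
proof -
  have "u \<bullet> (\<Sum>k\<in>J. c k *\<^sub>R a k) = (\<Sum>k\<in>J. c k * (u \<bullet> a k))" by (simp add: inner_sum_right)
  also have "\<dots> = (\<Sum>k\<in>J. if k = j then c j else 0)" by (intro sum.cong) (auto simp: u)
  also have "\<dots> = (if j \<in> J then c j else 0)" using J by (simp add: sum.delta')
  finally show ?thesis .
qed

lemma dual_family:
  fixes a :: "'n::finite \<Rightarrow> real^'n"
  assumes ss: "spherical_simplex a"
  shows "\<exists>u. \<forall>k m. u k \<bullet> a m = (if m = k then 1 else 0)"
proof -
  have "\<forall>k. \<exists>v. \<forall>m. v \<bullet> a m = (if m = k then 1 else 0)"
  proof
    fix k show "\<exists>v. \<forall>m. v \<bullet> a m = (if m = k then 1 else 0)"
      using ss_dual[OF ss, of "\<lambda>m. if m = k then 1 else 0"] .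
  qed
  thus ?thesis by (rule choice)
qed

lemma opp_point_eq:
  fixes a :: "'n::finite \<Rightarrow> real^'n"
  assumes ss: "spherical_simplex a" and Cdef: "circumcenter (sco a UNIV) = C"
    and rep: "C = (\<Sum>j\<in>UNIV. l j *\<^sub>R a j)" and l0: "\<And>j. 0 \<le> l j"
    and nz: "j0 \<noteq> i" "l j0 \<noteq> 0"
  shows "opp_point a i = (C - l i *\<^sub>R a i) /\<^sub>R norm (C - l i *\<^sub>R a i)"
proof -
  define d where "d = C - l i *\<^sub>R a i"
  have dsum: "d = (\<Sum>j\<in>UNIV - {i}. l j *\<^sub>R a j)"
    unfolding d_def rep by (subst sum.remove[of UNIV i]) auto
  obtain u where u: "\<And>k m. u k \<bullet> a m = (if m = k then 1 else 0)"
    using dual_family[OF ss] by blast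
  have ud: "u k \<bullet> d = (if k \<in> UNIV - {i} then l k else 0)" for k
    unfolding dsum by (rule dual_sum) (auto simp: u)
  have uC: "u k \<bullet> C = l k" for k
    unfolding rep by (subst dual_sum[where j = k]) (auto simp: u)
  have dnz: "d \<noteq> 0" using ud[of j0] nz by auto
  define p0 where "p0 = d /\<^sub>R norm d"
  have p0n: "norm p0 = 1" unfolding p0_def using dnz by simp
  have p0gc: "p0 \<in> great_circle (a i) C"
  proof -
    have "C \<in> span {a i, C}" "a i \<in> span {a i, C}" by (auto intro: span_base)
    hence "d \<in> span {a i, C}" unfolding d_def by (intro span_diff span_scale)
    hence "p0 \<in> span {a i, C}" unfolding p0_def by (intro span_scale)
    thus ?thesis unfolding great_circle_def using p0n by simp
  qed
  have p0sco: "p0 \<in> sco a (UNIV - {i})"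
  proof -
    have e1: "p0 = (\<Sum>j\<in>UNIV - {i}. l j *\<^sub>R a j) /\<^sub>R norm (\<Sum>j\<in>UNIV - {i}. l j *\<^sub>R a j)"
      unfolding p0_def dsum ..
    have e2: "(\<forall>j\<in>UNIV - {i}. 0 \<le> l j) \<and> (\<exists>j\<in>UNIV - {i}. l j \<noteq> 0)"
      using l0 nz by blast
    show ?thesis unfolding sco_def mem_Collect_eq
      by (rule exI[of _ l], rule conjI[OF e1 e2])
  qed
  have uniq: "p = p0" if pgc: "p \<in> great_circle (a i) C" and psco: "p \<in> sco a (UNIV - {i})" for p
  proof -
    have pn: "norm p = 1" and psp: "p \<in> span {a i, C}" using pgc unfolding great_circle_def by auto
    obtain \<alpha> where "p - \<alpha> *\<^sub>R a i \<in> span {C}" using psp span_breakdown_eq[of p "a i" "{C}"] by auto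
    then obtain \<beta> where "p - \<alpha> *\<^sub>R a i = \<beta> *\<^sub>R C" unfolding span_singleton by auto
    hence pab: "p = \<alpha> *\<^sub>R a i + \<beta> *\<^sub>R C" by (simp add: algebra_simps)
    obtain l' where pl: "p = (\<Sum>j\<in>UNIV - {i}. l' j *\<^sub>R a j) /\<^sub>R norm (\<Sum>j\<in>UNIV - {i}. l' j *\<^sub>R a j)"
      and l'0: "\<forall>j\<in>UNIV - {i}. 0 \<le> l' j" and l'nz: "\<exists>j\<in>UNIV - {i}. l' j \<noteq> 0"
      using psco unfolding sco_def by blast
    define s where "s = (\<Sum>j\<in>UNIV - {i}. l' j *\<^sub>R a j)"
    have us: "u k \<bullet> s = (if k \<in> UNIV - {i} then l' k else 0)" for k
      unfolding s_def by (rule dual_sum) (auto simp: u)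
    obtain j1 where j1: "j1 \<noteq> i" "l' j1 \<noteq> 0" using l'nz by blast
    have l'j1: "0 < l' j1" using l'0 j1 by force
    have snz: "s \<noteq> 0" using us[of j1] j1 by auto
    have ns: "0 < norm s" using snz by simp
    have "u i \<bullet> p = 0" unfolding pl s_def[symmetric] using us[of i] by simp
    moreover have "u i \<bullet> p = \<alpha> + \<beta> * l i" unfolding pab using u[of i i] uC[of i]
      by (simp add: inner_add_right)
    ultimately have al: "\<alpha> = - \<beta> * l i" by simp
    have pbd: "p = \<beta> *\<^sub>R d" unfolding pab al d_def by (simp add: algebra_simps)
    have "u j1 \<bullet> p = l' j1 / norm s" unfolding pl s_def[symmetric] using us[of j1] j1 by (simp add: divide_inverse mult.commute)
    moreover have "u j1 \<bullet> p = \<beta> * l j1" unfolding pbd using ud[of j1] j1 by simp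
    ultimately have "0 < \<beta> * l j1" using l'j1 ns by simp
    hence b0: "0 < \<beta>" using l0[of j1] by (smt (verit) mult_nonpos_nonneg)
    have "\<beta> * norm d = 1" using pn unfolding pbd using b0 by simp
    hence "\<beta> = 1 / norm d" using dnz by (simp add: field_simps)
    thus "p = p0" unfolding pbd p0_def by (simp add: divide_inverse)
  qed
  have "opp_point a i = p0" unfolding opp_point_def Cdef
    apply (rule the_equality)
     apply (rule conjI[OF p0gc p0sco])
    apply (erule conjE)
    apply (erule (1) uniq)
    done
  thus ?thesis unfolding p0_def d_def .
qed

definition phi :: "real \<Rightarrow> real \<Rightarrow> real" where
  "phi \<kappa> u = u / sqrt (u^2 + \<kappa>)"

lemma phi_mono_nonneg:
  assumes k: "0 < \<kappa>" and u: "0 \<le> u" and uw: "u \<le> w"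
  shows "phi \<kappa> u \<le> phi \<kappa> w"
proof -
  have w: "0 \<le> w" using u uw by simp
  have su: "0 < sqrt (u^2 + \<kappa>)" and sw: "0 < sqrt (w^2 + \<kappa>)"
    using k by (simp_all add: add_nonneg_pos)
  have "u^2 * (w^2 + \<kappa>) \<le> w^2 * (u^2 + \<kappa>)"
  proof -
    have "u^2 \<le> w^2" using u uw by (simp add: power_mono)
    hence "u^2 * \<kappa> \<le> w^2 * \<kappa>" using k by simp
    thus ?thesis by (simp add: algebra_simps)
  qed
  hence "sqrt (u^2 * (w^2 + \<kappa>)) \<le> sqrt (w^2 * (u^2 + \<kappa>))" by simp
  hence "u * sqrt (w^2 + \<kappa>) \<le> w * sqrt (u^2 + \<kappa>)"
    using u w by (simp add: real_sqrt_mult)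
  thus ?thesis unfolding phi_def using su sw by (simp add: divide_simps mult.commute)
qed

lemma phi_neg: "phi \<kappa> (- u) = - phi \<kappa> u"
  unfolding phi_def by simp

lemma phi_mono:
  assumes k: "0 < \<kappa>" and uw: "u \<le> w"
  shows "phi \<kappa> u \<le> phi \<kappa> w"
proof (cases "0 \<le> u")
  case True thus ?thesis using phi_mono_nonneg[OF k True uw] by simp
next
  case False
  hence u: "u < 0" by simp
  have sp: "0 < sqrt (v^2 + \<kappa>)" for v using k by (simp add: add_nonneg_pos)
  show ?thesis
  proof (cases "0 \<le> w")
    case True
    have "phi \<kappa> u \<le> 0" unfolding phi_def using u sp[of u] by (simp add: divide_nonpos_pos)
    moreover have "0 \<le> phi \<kappa> w" unfolding phi_def using True sp[of w] by simp
    ultimately show ?thesis by simp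
  next
    case False
    have "phi \<kappa> (- w) \<le> phi \<kappa> (- u)" using False uw by (intro phi_mono_nonneg[OF k]) auto
    thus ?thesis unfolding phi_neg by simp
  qed
qed

lemma dot_opp:
  fixes C x :: "real^'n"
  assumes Cn: "norm C = 1" and an: "norm x = 1" and Cx: "C \<bullet> x = \<gamma>"
  shows "x \<bullet> ((C - t *\<^sub>R x) /\<^sub>R norm (C - t *\<^sub>R x)) = phi (1 - \<gamma>^2) (\<gamma> - t)"
proof -
  have CC: "C \<bullet> C = 1" using Cn by (metis power2_norm_eq_inner one_power2)
  have xx: "x \<bullet> x = 1" using an by (metis power2_norm_eq_inner one_power2)
  have "(C - t *\<^sub>R x) \<bullet> (C - t *\<^sub>R x) = C \<bullet> C - t * (C \<bullet> x) - t * (x \<bullet> C) + t * (t * (x \<bullet> x))"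
    by (simp only: inner_diff_left inner_diff_right inner_scaleR_left inner_scaleR_right) (simp add: algebra_simps)
  also have "\<dots> = (\<gamma> - t)^2 + (1 - \<gamma>^2)" unfolding CC xx using Cx
    by (simp add: inner_commute power2_eq_square algebra_simps)
  finally have nd: "norm (C - t *\<^sub>R x) = sqrt ((\<gamma> - t)^2 + (1 - \<gamma>^2))"
    by (simp add: norm_eq_sqrt_inner)
  have "x \<bullet> (C - t *\<^sub>R x) = \<gamma> - t" using Cx xx by (simp add: inner_diff_right inner_commute)
  thus ?thesis unfolding phi_def nd by (simp add: divide_inverse mult.commute)
qed

lemma sum_l:
  fixes a :: "'n::finite \<Rightarrow> real^'n"
  assumes Cn: "norm C = 1" and Ca: "\<And>i. C \<bullet> a i = \<gamma>" and rep: "C = (\<Sum>j\<in>UNIV. l j *\<^sub>R a j)"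
  shows "\<gamma> * (\<Sum>j\<in>UNIV. l j) = 1"
proof -
  have CC: "C \<bullet> C = 1" using Cn by (metis power2_norm_eq_inner one_power2)
  have "C \<bullet> C = (\<Sum>j\<in>UNIV. l j * (C \<bullet> a j))" by (subst (2) rep) (simp add: inner_sum_right)
  thus ?thesis using CC by (simp add: Ca sum_distrib_left mult.commute)
qed

lemma exists_other:
  fixes a :: "'n::finite \<Rightarrow> real^'n"
  assumes ss: "spherical_simplex a" and Cn: "norm C = 1" and Ca: "\<And>i. C \<bullet> a i = \<gamma>"
    and rep: "C = (\<Sum>j\<in>UNIV. l j *\<^sub>R a j)" and g0: "0 < \<gamma>" and g1: "\<gamma> < 1"
  shows "\<exists>j0. j0 \<noteq> i \<and> l j0 \<noteq> 0"
proof (rule ccontr)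
  assume "\<not> (\<exists>j0. j0 \<noteq> i \<and> l j0 \<noteq> 0)"
  hence z: "\<And>j. j \<noteq> i \<Longrightarrow> l j = 0" by blast
  have "C = l i *\<^sub>R a i + (\<Sum>j\<in>UNIV - {i}. l j *\<^sub>R a j)" unfolding rep by (subst sum.remove[of UNIV i]) auto
  also have "(\<Sum>j\<in>UNIV - {i}. l j *\<^sub>R a j) = 0" using z by (intro sum.neutral) auto
  finally have Ci: "C = l i *\<^sub>R a i" by simp
  have an: "norm (a i) = 1" using ss unfolding spherical_simplex_def by auto
  have xx: "a i \<bullet> a i = 1" using an by (metis power2_norm_eq_inner one_power2)
  have "\<gamma> = l i" using Ca[of i] unfolding Ci using xx by simp
  moreover have "norm C = \<bar>l i\<bar>" unfolding Ci using an by simp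
  ultimately show False using Cn g0 g1 by simp
qed

lemma simplex_data:
  fixes a :: "'n::finite \<Rightarrow> real^'n"
  assumes ss: "spherical_simplex a" and voc: "vertices_on_circumsphere a"
    and g1: "cos (circumradius (sco a UNIV)) < 1"
  shows "\<exists>l. circumcenter (sco a UNIV) = (\<Sum>j\<in>UNIV. l j *\<^sub>R a j) \<and> (\<forall>j. 0 \<le> l j)
     \<and> cos (circumradius (sco a UNIV)) * (\<Sum>j\<in>UNIV. l j) = 1
     \<and> (\<forall>i. sangle (a i) (opp_point a i) =
            arccos (phi (1 - (cos (circumradius (sco a UNIV)))^2) (cos (circumradius (sco a UNIV)) - l i)))"
proof -
  define C where "C = circumcenter (sco a UNIV)"
  define R where "R = circumradius (sco a UNIV)"
  define \<gamma> where "\<gamma> = cos R"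
  have Cn: "norm C = 1" and Ca: "\<And>i. C \<bullet> a i = \<gamma>" and g0: "0 < \<gamma>"
    using circ_props[OF ss voc] unfolding C_def R_def \<gamma>_def by auto
  have an: "\<And>i. norm (a i) = 1" using ss unfolding spherical_simplex_def by auto
  obtain l where rep: "C = (\<Sum>j\<in>UNIV. l j *\<^sub>R a j)" using ss_rep[OF ss] by blast
  have Rg: "R = arccos \<gamma>" using voc Ca[of undefined] unfolding vertices_on_circumsphere_def sangle_def C_def R_def
    by metis
  have minim: "g \<le> \<gamma>" if C'n: "norm C' = 1" and gp: "0 < g" and ge: "\<And>j. g \<le> C' \<bullet> a j" for C' g
  proof (rule ccontr)
    assume "\<not> g \<le> \<gamma>"
    hence lt: "\<gamma> < g" by simp
    have "g \<le> 1" using ge[of undefined] dot_unit_bound(2)[OF C'n an[of undefined]] by linarith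
    hence "arccos g < arccos \<gamma>" using lt g0 by (intro arccos_less_arccos) auto
    moreover have "R \<le> arccos g" unfolding R_def by (rule cr_ge_g[OF ss C'n gp ge])
    ultimately show False using Rg by simp
  qed
  have l0': "0 \<le> l j" for j
    by (rule kkt[OF ss Cn Ca g0 rep]) (rule minim, assumption+)
  hence l0: "\<forall>j. 0 \<le> l j" by blast
  have sl: "\<gamma> * (\<Sum>j\<in>UNIV. l j) = 1" by (rule sum_l[OF Cn Ca rep])
  have gl1: "\<gamma> < 1" using g1 unfolding \<gamma>_def R_def .
  have "sangle (a i) (opp_point a i) = arccos (phi (1 - \<gamma>^2) (\<gamma> - l i))" for i
  proof -
    obtain j0 where j0: "j0 \<noteq> i" "l j0 \<noteq> 0" using exists_other[OF ss Cn Ca rep g0 gl1, of i] by blast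
    have "opp_point a i = (C - l i *\<^sub>R a i) /\<^sub>R norm (C - l i *\<^sub>R a i)"
      by (rule opp_point_eq[OF ss C_def[symmetric] rep _ j0]) (use l0 in blast)
    thus ?thesis unfolding sangle_def using dot_opp[OF Cn an Ca] by simp
  qed
  thus ?thesis using rep l0 sl unfolding C_def[symmetric] R_def[symmetric] \<gamma>_def[symmetric] by blast
qed

lemma phi_bound:
  assumes k: "0 < \<kappa>"
  shows "-1 \<le> phi \<kappa> u" "phi \<kappa> u \<le> 1"
proof -
  have sp: "0 < sqrt (u^2 + \<kappa>)" using k by (simp add: add_nonneg_pos)
  have "sqrt (u^2) \<le> sqrt (u^2 + \<kappa>)" using k by (intro real_sqrt_le_mono) simp
  hence au: "\<bar>u\<bar> \<le> sqrt (u^2 + \<kappa>)" by simp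
  have "\<bar>phi \<kappa> u\<bar> = \<bar>u\<bar> / sqrt (u^2 + \<kappa>)" unfolding phi_def using sp by (simp add: abs_div)
  also have "\<dots> \<le> 1" using au sp by simp
  finally show "-1 \<le> phi \<kappa> u" "phi \<kappa> u \<le> 1" by auto
qed

theorem lemma3p5:
  fixes a b :: "'n::finite \<Rightarrow> real^'n"
  assumes "CARD('n) \<ge> 2"
    and "spherical_simplex a" and "vertices_on_circumsphere a"
    and "regular_simplex b" and "vertices_on_circumsphere b"
    and "circumradius (sco b UNIV) = circumradius (sco a UNIV)"
    and "cos (circumradius (sco a UNIV)) < 1 / sqrt (real CARD('n))"
  shows "vertex_diameter b \<le> vertex_diameter a"
proof -
  note card2 = assms(1)
  note ssa = assms(2) and voca = assms(3) and reg = assms(4) and vocb = assms(5)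
  have ssb: "spherical_simplex b" using reg unfolding regular_simplex_def by blast
  define n where "n = real CARD('n)"
  have n2: "2 \<le> n" unfolding n_def using card2 by simp
  define \<gamma> where "\<gamma> = cos (circumradius (sco a UNIV))"
  have gb: "cos (circumradius (sco b UNIV)) = \<gamma>" unfolding \<gamma>_def assms(6) ..
  have g0: "0 < \<gamma>" unfolding \<gamma>_def using circ_props(3)[OF ssa voca] .
  have "1 \<le> sqrt n" using n2 by simp
  hence "1 / sqrt n \<le> 1" by simp
  hence g1: "\<gamma> < 1" using assms(7) unfolding \<gamma>_def n_def by linarith
  define \<kappa> where "\<kappa> = 1 - \<gamma>^2"
  have k0: "0 < \<kappa>" unfolding \<kappa>_def using g0 g1 mult_strict_mono[of \<gamma> 1 \<gamma> 1] by (simp add: power2_eq_square)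
  obtain la where repa: "circumcenter (sco a UNIV) = (\<Sum>j\<in>UNIV. la j *\<^sub>R a j)"
    and la0: "\<forall>j. 0 \<le> la j" and sla: "\<gamma> * (\<Sum>j\<in>UNIV. la j) = 1"
    and anga: "\<And>i. sangle (a i) (opp_point a i) = arccos (phi \<kappa> (\<gamma> - la i))"
    using simplex_data[OF ssa voca] g1 unfolding \<gamma>_def[symmetric] \<kappa>_def[symmetric] by blast
  obtain lb where repb: "circumcenter (sco b UNIV) = (\<Sum>j\<in>UNIV. lb j *\<^sub>R b j)"
    and slb: "\<gamma> * (\<Sum>j\<in>UNIV. lb j) = 1"
    and angb: "\<And>i. sangle (b i) (opp_point b i) = arccos (phi \<kappa> (\<gamma> - lb i))"
    using simplex_data[OF ssb vocb] g1 unfolding gb \<kappa>_def[symmetric] by blast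
  define L where "L = 1 / (n * \<gamma>)"
  have sumL: "(\<Sum>j\<in>(UNIV::'n set). L) = 1 / \<gamma>" unfolding L_def n_def using g0 card2 by simp
  obtain k where kL: "L \<le> la k"
  proof (rule ccontr)
    assume "\<not> thesis"
    have lt: "la k < L" for k
    proof (rule ccontr)
      assume "\<not> la k < L"
      hence "L \<le> la k" by simp
      from that[OF this] \<open>\<not> thesis\<close> show False by blast
    qed
    have "(\<Sum>j\<in>UNIV. la j) < (\<Sum>j\<in>(UNIV::'n set). L)" by (rule sum_strict_mono) (auto simp: lt)
    hence "\<gamma> * (\<Sum>j\<in>UNIV. la j) < \<gamma> * (1 / \<gamma>)" unfolding sumL using g0 by (intro mult_strict_left_mono) auto
    thus False using sla g0 by simp
  qed
  have "\<not> (\<forall>x y::'n. x = y)"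
  proof
    assume "\<forall>x y::'n. x = y"
    hence "card (UNIV::'n set) \<le> Suc 0" by (simp add: card_le_Suc0_iff_eq)
    thus False using card2 by simp
  qed
  then obtain i0 j0 :: 'n where ij0: "i0 \<noteq> j0" by blast
  define c where "c = b i0 \<bullet> b j0"
  have bn: "\<And>i. norm (b i) = 1" using ssb unfolding spherical_simplex_def by auto
  have bb: "b i \<bullet> b i = 1" for i using bn[of i] by (metis power2_norm_eq_inner one_power2)
  have bc: "b i \<bullet> b j = c" if "i \<noteq> j" for i j
  proof -
    have "arccos (b i \<bullet> b j) = arccos (b i0 \<bullet> b j0)"
      using reg that ij0 unfolding regular_simplex_def sangle_def by blast
    moreover have "\<bar>b i \<bullet> b j\<bar> \<le> 1" "\<bar>b i0 \<bullet> b j0\<bar> \<le> 1"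
      using dot_unit_bound[OF bn bn] by (auto simp: abs_le_iff)
    ultimately show ?thesis unfolding c_def using arccos_eq_iff by blast
  qed
  have c1: "c \<noteq> 1"
  proof
    assume "c = 1"
    have "(b i0 - b j0) \<bullet> (b i0 - b j0) = b i0 \<bullet> b i0 - 2 * c + b j0 \<bullet> b j0"
      unfolding c_def by (simp add: inner_diff_left inner_diff_right inner_commute)
    also have "\<dots> = 0" using \<open>c = 1\<close> bb by simp
    finally have "b i0 = b j0" by simp
    moreover have "inj b" using ssb unfolding spherical_simplex_def by blast
    ultimately show False using ij0 by (simp add: inj_eq)
  qed
  define Cb where "Cb = circumcenter (sco b UNIV)"
  have Cbb: "Cb \<bullet> b j = \<gamma>" for j unfolding Cb_def using circ_props(2)[OF ssb vocb] gb by simp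
  define Sb where "Sb = (\<Sum>j\<in>UNIV. lb j)"
  have lbj: "lb j = (\<gamma> - c * Sb) / (1 - c)" for j
  proof -
    have "\<gamma> = (\<Sum>k\<in>UNIV. lb k * (b k \<bullet> b j))"
      using Cbb[of j] unfolding Cb_def repb by (simp add: inner_sum_left)
    also have "\<dots> = lb j * (b j \<bullet> b j) + (\<Sum>k\<in>UNIV - {j}. lb k * (b k \<bullet> b j))"
      by (subst sum.remove[of UNIV j]) auto
    also have "(\<Sum>k\<in>UNIV - {j}. lb k * (b k \<bullet> b j)) = (\<Sum>k\<in>UNIV - {j}. lb k * c)"
      by (intro sum.cong) (auto simp: bc)
    also have "\<dots> = c * (Sb - lb j)" unfolding Sb_def
      by (subst sum.remove[of UNIV j]) (auto simp: sum_distrib_left mult.commute)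
    finally have "\<gamma> = lb j + c * (Sb - lb j)" using bb[of j] by simp
    hence "lb j * (1 - c) = \<gamma> - c * Sb" by (simp add: algebra_simps)
    thus ?thesis using c1 by (simp add: field_simps)
  qed
  define L' where "L' = (\<gamma> - c * Sb) / (1 - c)"
  have "(\<Sum>j\<in>UNIV. lb j) = (\<Sum>j\<in>(UNIV::'n set). L')"
    by (rule sum.cong[OF refl]) (simp only: lbj L'_def)
  hence "Sb = n * L'" unfolding Sb_def[symmetric] n_def by simp
  hence "\<gamma> * (n * L') = 1" using slb unfolding Sb_def by simp
  hence LL: "L' = L" unfolding L_def using g0 n2 by (simp add: field_simps)
  have lbL: "lb j = L" for j using lbj[of j] LL unfolding L'_def by simp
  have key: "sangle (b i) (opp_point b i) \<le> sangle (a k) (opp_point a k)" for i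
  proof -
    have "arccos (phi \<kappa> (\<gamma> - L)) \<le> arccos (phi \<kappa> (\<gamma> - la k))"
      by (rule arccos_le_arccos) (use phi_bound[OF k0] phi_mono[OF k0] kL in auto)
    thus ?thesis unfolding anga angb lbL .
  qed
  have "vertex_diameter b \<le> sangle (a k) (opp_point a k)"
    unfolding vertex_diameter_def using key by (subst Max_le_iff) auto
  also have "\<dots> \<le> vertex_diameter a" unfolding vertex_diameter_def by (intro Max_ge) auto
  finally show ?thesis .
qed

end
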